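(* Let $S:\mathbb{R}^d\times\mathbb{R}^k\to\mathbb{R}$ be a locally Lipschitz generating family for $L\subset T^*\mathbb{R}^d$, and let $\Phi(x,\eta')=(x,\phi(x,\eta'))$ be a $C^1$ fiberwise diffeomorphism of $\mathbb{R}^d\times\mathbb{R}^k$ (i.e. a $C^1$ diffeomorphism such that each $\eta'\mapsto\phi(x,\eta')$ is a diffeomorphism of $\mathbb{R}^k$). Then $S':=S\circ\Phi$ is also a generating family for $L$.
   Context: A locally Lipschitz family $S:\mathbb{R}^d\times\mathbb{R}^k\to\mathbb{R}$ is called a generating family for $L\subset T^*\mathbb{R}^d$ when $L=\{(x,y)\in T^*\mathbb{R}^d:\exists\eta\in\mathbb{R}^k,\ (y,0)\in\partial S(x,\eta)\}$, where $\partial S$ is Clarke's generalized derivative of $S$ as a function on $\mathbb{R}^d\times\mathbb{R}^k$: for a locally Lipschitz $f$ on $\mathbb{R}^m$, $\partial f(a)$ is the convex hull of the set of limits of $df(x_n)$ over sequences $x_n\to a$ of points where $f$ is differentiable. *)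

theory Defs
  imports "HOL-Analysis.Analysis"
begin

definition locally_lipschitz :: "('a::metric_space \<Rightarrow> 'b::metric_space) \<Rightarrow> bool" where
  "locally_lipschitz f \<longleftrightarrow> (\<forall>z. \<exists>U C. open U \<and> z \<in> U \<and> C-lipschitz_on U f)"

definition clarke_subdiff :: "('a::euclidean_space \<Rightarrow> real) \<Rightarrow> 'a \<Rightarrow> ('a \<Rightarrow>\<^sub>L real) set" where
  "clarke_subdiff f a = convex hull
     {D. \<exists>X Df. X \<longlonglongrightarrow> a \<and> (\<forall>n. (f has_derivative blinfun_apply (Df n)) (at (X n)))
              \<and> Df \<longlonglongrightarrow> D}"

text \<open>Points of T*R^d are pairs (x,y) with y a covector on R^d; the covector (y,0) on
  R^d x R^k is y composed with the first projection.\<close>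
definition generating_family ::
  "('a::euclidean_space \<times> 'b::euclidean_space \<Rightarrow> real) \<Rightarrow> ('a \<times> ('a \<Rightarrow>\<^sub>L real)) set \<Rightarrow> bool" where
  "generating_family S L \<longleftrightarrow> locally_lipschitz S \<and>
     L = {(x, y). \<exists>\<eta>. (y o\<^sub>L fst_blinfun) \<in> clarke_subdiff S (x, \<eta>)}"

definition C1_map :: "('a::euclidean_space \<Rightarrow> 'b::euclidean_space) \<Rightarrow> bool" where
  "C1_map f \<longleftrightarrow> (\<exists>f'. (\<forall>z. (f has_derivative blinfun_apply (f' z)) (at z)) \<and> continuous_on UNIV f')"

definition C1_diffeo :: "('a::euclidean_space \<Rightarrow> 'a) \<Rightarrow> bool" where
  "C1_diffeo f \<longleftrightarrow> bij f \<and> C1_map f \<and> C1_map (inv f)"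

end

theory Submission
  imports Defs
begin

definition Gset :: "('c::euclidean_space \<Rightarrow> real) \<Rightarrow> 'c \<Rightarrow> ('c \<Rightarrow>\<^sub>L real) set" where
  "Gset f a = {D. \<exists>X Df. X \<longlonglongrightarrow> a \<and> (\<forall>n. (f has_derivative blinfun_apply (Df n)) (at (X n)))
              \<and> Df \<longlonglongrightarrow> D}"

lemma clarke_Gset: "clarke_subdiff f a = convex hull (Gset f a)"
  unfolding clarke_subdiff_def Gset_def by simp

lemma C1_cont:
  assumes "\<forall>z. (\<Psi> has_derivative blinfun_apply (\<Psi>' z)) (at z)"
  shows "continuous_on UNIV \<Psi>"
  using assms has_derivative_continuous continuous_at_imp_continuous_on by blast

lemma Gset_comp:
  fixes f :: "'c::euclidean_space \<Rightarrow> real" and \<Psi> :: "'d::euclidean_space \<Rightarrow> 'c"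
  assumes d: "\<forall>z. (\<Psi> has_derivative blinfun_apply (\<Psi>' z)) (at z)"
    and c: "continuous_on UNIV \<Psi>'"
    and inv: "\<forall>w. \<Psi> (g w) = w" and gc: "continuous_on UNIV g" and ga: "g (\<Psi> a) = a"
    and D: "D \<in> Gset f (\<Psi> a)"
  shows "D o\<^sub>L \<Psi>' a \<in> Gset (f \<circ> \<Psi>) a"
proof -
  from D obtain X Df where X: "X \<longlonglongrightarrow> \<Psi> a" and Dd: "\<forall>n. (f has_derivative blinfun_apply (Df n)) (at (X n))"
    and Dl: "Df \<longlonglongrightarrow> D" unfolding Gset_def by blast
  define Y where "Y n = g (X n)" for n
  have Y: "Y \<longlonglongrightarrow> a"
    unfolding Y_def using continuous_on_tendsto_compose[OF gc X] ga by simp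
  have "(\<lambda>n. \<Psi>' (Y n)) \<longlonglongrightarrow> \<Psi>' a"
    using continuous_on_tendsto_compose[OF c Y] by simp
  hence L: "(\<lambda>n. Df n o\<^sub>L \<Psi>' (Y n)) \<longlonglongrightarrow> (D o\<^sub>L \<Psi>' a)"
    using bounded_bilinear.tendsto[OF bounded_bilinear_blinfun_compose Dl] by blast
  have "((f \<circ> \<Psi>) has_derivative blinfun_apply (Df n o\<^sub>L \<Psi>' (Y n))) (at (Y n))" for n
  proof -
    have "(f has_derivative blinfun_apply (Df n)) (at (\<Psi> (Y n)))"
      using Dd inv unfolding Y_def by simp
    from diff_chain_at[OF d[rule_format] this] show ?thesis
      by (simp add: blinfun_compose.rep_eq)
  qed
  with Y L show ?thesis unfolding Gset_def mem_Collect_eq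
    by (intro exI[of _ Y] exI[of _ "\<lambda>n. Df n o\<^sub>L \<Psi>' (Y n)"]) auto
qed

lemma lin_comp: "linear (\<lambda>D::'c::real_normed_vector \<Rightarrow>\<^sub>L real. D o\<^sub>L M)"
  by (simp add: bounded_linear.linear bounded_bilinear.bounded_linear_left[OF bounded_bilinear_blinfun_compose])

lemma C1_loclip:
  fixes \<Psi> :: "'d::euclidean_space \<Rightarrow> 'c::euclidean_space"
  assumes d: "\<forall>z. (\<Psi> has_derivative blinfun_apply (\<Psi>' z)) (at z)"
    and c: "continuous_on UNIV \<Psi>'"
  shows "\<exists>B. B-lipschitz_on (ball z 1) \<Psi>"
proof -
  have "compact (\<Psi>' ` cball z 1)"
    by (rule compact_continuous_image[OF continuous_on_subset[OF c]]) auto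
  then obtain B where B: "\<And>w. w \<in> cball z 1 \<Longrightarrow> norm (\<Psi>' w) \<le> B"
    using compact_imp_bounded bounded_iff by (metis imageI)
  have B0: "0 \<le> B" by (meson B centre_in_cball order_trans norm_ge_zero zero_le_one)
  have "B-lipschitz_on (ball z 1) \<Psi>"
  proof (rule lipschitz_onI)
    fix x y assume xy: "x \<in> ball z 1" "y \<in> ball z 1"
    have "norm (\<Psi> x - \<Psi> y) \<le> B * norm (x - y)"
      apply (rule differentiable_bound[where f' = "\<lambda>w. blinfun_apply (\<Psi>' w)", OF convex_ball _ _ xy])
      using d has_derivative_at_withinI apply blast
      using B by (simp add: norm_blinfun.rep_eq)
    thus "dist (\<Psi> x) (\<Psi> y) \<le> B * dist x y" by (simp add: dist_norm)
  qed (use B0 in auto)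
  thus ?thesis by blast
qed

lemma blinfun_compose_assoc: "(A o\<^sub>L B) o\<^sub>L C = A o\<^sub>L (B o\<^sub>L C)"
  by (rule blinfun_eqI) (simp add: blinfun_compose.rep_eq)

lemma blinfun_compose_id_right[simp]: "A o\<^sub>L id_blinfun = A"
  by (rule blinfun_eqI) (simp add: blinfun_compose.rep_eq)

theorem lemma2p20:
  fixes S :: "'a::euclidean_space \<times> 'b::euclidean_space \<Rightarrow> real"
    and \<phi> :: "'a \<times> 'b \<Rightarrow> 'b"
    and L :: "('a \<times> ('a \<Rightarrow>\<^sub>L real)) set"
  assumes "generating_family S L"
    and "C1_diffeo (\<lambda>(x, \<eta>'). (x, \<phi> (x, \<eta>')))"
    and "\<forall>x. C1_diffeo (\<lambda>\<eta>'. \<phi> (x, \<eta>'))"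
  shows "generating_family (S \<circ> (\<lambda>(x, \<eta>'). (x, \<phi> (x, \<eta>')))) L"
proof -
  define P where "P = (\<lambda>(x, \<eta>'). (x, \<phi> (x, \<eta>')))"
  define Q where "Q = inv P"
  have bP: "bij P" and "C1_map P" and "C1_map Q"
    using assms(2) unfolding C1_diffeo_def P_def Q_def by auto
  then obtain P' Q' where dP: "\<forall>z. (P has_derivative blinfun_apply (P' z)) (at z)"
    and cP: "continuous_on UNIV P'"
    and dQ: "\<forall>z. (Q has_derivative blinfun_apply (Q' z)) (at z)"
    and cQ: "continuous_on UNIV Q'"
    unfolding C1_map_def by blast
  have PQ: "\<And>w. P (Q w) = w" unfolding Q_def using bP by (simp add: bij_is_surj surj_f_inv_f)
  have QP: "\<And>w. Q (P w) = w" unfolding Q_def using bP by (simp add: bij_is_inj)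
  have conP: "continuous_on UNIV P" using C1_cont dP by blast
  have conQ: "continuous_on UNIV Q" using C1_cont dQ by blast
  have inv1: "Q' (P a) o\<^sub>L P' a = id_blinfun" for a
  proof -
    have "((Q \<circ> P) has_derivative blinfun_apply (Q' (P a)) \<circ> blinfun_apply (P' a)) (at a)"
      using diff_chain_at dP dQ by blast
    moreover have "Q \<circ> P = id" using QP by auto
    ultimately have "(id has_derivative blinfun_apply (Q' (P a)) \<circ> blinfun_apply (P' a)) (at a)" by simp
    from has_derivative_unique[OF has_derivative_id[unfolded id_def[symmetric]] this]
    show ?thesis by (intro blinfun_eqI) (metis blinfun_compose.rep_eq comp_apply id_apply id_blinfun.rep_eq)
  qed
  have inv2: "P' a o\<^sub>L Q' (P a) = id_blinfun" for a
  proof -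
    have "((P \<circ> Q) has_derivative blinfun_apply (P' (Q (P a))) \<circ> blinfun_apply (Q' (P a))) (at (P a))"
      using diff_chain_at dP dQ by blast
    moreover have "P \<circ> Q = id" using PQ by auto
    ultimately have "(id has_derivative blinfun_apply (P' a) \<circ> blinfun_apply (Q' (P a))) (at (P a))"
      by (simp add: QP)
    from has_derivative_unique[OF has_derivative_id[unfolded id_def[symmetric]] this]
    show ?thesis by (intro blinfun_eqI) (metis blinfun_compose.rep_eq comp_apply id_apply id_blinfun.rep_eq)
  qed
  have fstP: "fst_blinfun o\<^sub>L P' a = fst_blinfun" for a
  proof -
    have "((\<lambda>z. fst (P z)) has_derivative (\<lambda>v. fst (P' a v))) (at a)"
      using has_derivative_fst dP by blast
    moreover have "(\<lambda>z. fst (P z)) = fst" unfolding P_def by auto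
    ultimately have "(fst has_derivative (\<lambda>v. fst (P' a v))) (at a)" by simp
    have "(fst has_derivative fst) (at a)" by (rule bounded_linear_imp_has_derivative[OF bounded_linear_fst])
    from has_derivative_unique[OF this \<open>(fst has_derivative (\<lambda>v. fst (P' a v))) (at a)\<close>]
    show ?thesis by (intro blinfun_eqI) (metis blinfun_compose.rep_eq comp_apply fst_blinfun.rep_eq)
  qed
  have G: "Gset (S \<circ> P) a = (\<lambda>D. D o\<^sub>L P' a) ` Gset S (P a)" for a
  proof
    show "(\<lambda>D. D o\<^sub>L P' a) ` Gset S (P a) \<subseteq> Gset (S \<circ> P) a"
      using Gset_comp[where g=Q and a=a and f=S, OF dP cP _ conQ] PQ QP by auto
  next
    show "Gset (S \<circ> P) a \<subseteq> (\<lambda>D. D o\<^sub>L P' a) ` Gset S (P a)"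
    proof
      fix E assume E: "E \<in> Gset (S \<circ> P) a"
      have "E o\<^sub>L Q' (P a) \<in> Gset (S \<circ> P \<circ> Q) (P a)"
        using Gset_comp[where g=P and a="P a" and f="S \<circ> P" and D=E, OF dQ cQ _ conP] PQ QP E by auto
      moreover have "S \<circ> P \<circ> Q = S" using PQ by auto
      moreover have "E = (E o\<^sub>L Q' (P a)) o\<^sub>L P' a"
        by (simp add: blinfun_compose_assoc inv1)
      ultimately show "E \<in> (\<lambda>D. D o\<^sub>L P' a) ` Gset S (P a)" by auto
    qed
  qed
  have C: "clarke_subdiff (S \<circ> P) a = (\<lambda>D. D o\<^sub>L P' a) ` clarke_subdiff S (P a)" for a
    unfolding clarke_Gset G using convex_hull_linear_image[OF lin_comp] by metis
  have key: "(y o\<^sub>L fst_blinfun) \<in> clarke_subdiff (S \<circ> P) a \<longleftrightarrow> (y o\<^sub>L fst_blinfun) \<in> clarke_subdiff S (P a)" for y a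
  proof
    assume "(y o\<^sub>L fst_blinfun) \<in> clarke_subdiff (S \<circ> P) a"
    then obtain D where D: "D \<in> clarke_subdiff S (P a)" and e: "y o\<^sub>L fst_blinfun = D o\<^sub>L P' a"
      unfolding C by auto
    have "D = (D o\<^sub>L P' a) o\<^sub>L Q' (P a)" by (simp add: blinfun_compose_assoc inv2)
    also have "\<dots> = ((y o\<^sub>L fst_blinfun) o\<^sub>L P' a) o\<^sub>L Q' (P a)"
      by (simp add: e[symmetric] blinfun_compose_assoc fstP)
    also have "\<dots> = y o\<^sub>L fst_blinfun" by (simp add: blinfun_compose_assoc inv2)
    finally show "(y o\<^sub>L fst_blinfun) \<in> clarke_subdiff S (P a)" using D by simp
  next
    assume "(y o\<^sub>L fst_blinfun) \<in> clarke_subdiff S (P a)"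
    moreover have "(y o\<^sub>L fst_blinfun) o\<^sub>L P' a = y o\<^sub>L fst_blinfun"
      by (simp add: blinfun_compose_assoc fstP)
    ultimately show "(y o\<^sub>L fst_blinfun) \<in> clarke_subdiff (S \<circ> P) a"
      unfolding C by (metis image_eqI)
  qed
  have gS: "locally_lipschitz S" and LS: "L = {(x, y). \<exists>\<eta>. (y o\<^sub>L fst_blinfun) \<in> clarke_subdiff S (x, \<eta>)}"
    using assms(1) unfolding generating_family_def by auto
  have surj: "\<exists>\<eta>'. \<phi> (x, \<eta>') = \<eta>" for x \<eta>
    using assms(3) unfolding C1_diffeo_def bij_def surj_def by metis
  have L2: "L = {(x, y). \<exists>\<eta>'. (y o\<^sub>L fst_blinfun) \<in> clarke_subdiff (S \<circ> P) (x, \<eta>')}"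
  proof -
    have Pe: "P (x, e) = (x, \<phi> (x, e))" for x e unfolding P_def by simp
    have "(\<exists>\<eta>. (y o\<^sub>L fst_blinfun) \<in> clarke_subdiff S (x, \<eta>)) \<longleftrightarrow>
          (\<exists>\<eta>'. (y o\<^sub>L fst_blinfun) \<in> clarke_subdiff (S \<circ> P) (x, \<eta>'))" for x y
      unfolding key Pe using surj by metis
    thus ?thesis unfolding LS by auto
  qed
  have ll: "locally_lipschitz (S \<circ> P)"
    unfolding locally_lipschitz_def
  proof
    fix z
    obtain U C where U: "open U" "P z \<in> U" "C-lipschitz_on U S"
      using gS unfolding locally_lipschitz_def by blast
    obtain B where B: "B-lipschitz_on (ball z 1) P" using C1_loclip[OF dP cP] by blast
    define V where "V = ball z 1 \<inter> P -` U"
    have oV: "open V" unfolding V_def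
      using open_vimage[OF U(1) continuous_on_subset[OF conP]] by (simp add: open_Int)
    have "(C * B)-lipschitz_on V (S \<circ> P)"
      by (rule lipschitz_on_compose[OF lipschitz_on_subset[OF B] lipschitz_on_subset[OF U(3)]])
         (auto simp: V_def)
    moreover have "z \<in> V" using U(2) by (simp add: V_def)
    ultimately show "\<exists>U C. open U \<and> z \<in> U \<and> C-lipschitz_on U (S \<circ> P)" using oV by blast
  qed
  show ?thesis unfolding generating_family_def P_def[symmetric] using ll L2 by simp
qed

end
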